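(* Let $k\geq p\geq 0$ and $n\geq 2k-p+2$ be integers, and let $G$ be an $(n+p+1)$-closed nearly balanced bipartite graph of order $2n-1$. If $$e(G)>n(n-k+p-2)+(k+2)(k-p+1),$$ then $G$ contains a complete bipartite subgraph of order $2n-k+p-1$. Furthermore, if $\delta(G)\geq k$, then $K_{n-1,n-k+p}\subseteq G$ or $K_{n,n-k+p-1}\subseteq G$.
   Context: A bipartite graph $G=(X,Y;E)$ is nearly balanced if $|X|=|Y|+1$. For an integer $r$, $G$ is $r$-closed if $d_G(x)+d_G(y)<r$ for every non-adjacent pair $x\in X$, $y\in Y$. $e(G)$ is the number of edges, $\delta(G)$ the minimum degree; $K_{a,b}\subseteq G$ means $G$ has a subgraph isomorphic to the complete bipartite graph $K_{a,b}$. *)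

theory Defs
  imports Main
begin

definition bipartite_graph :: "'a set \<Rightarrow> 'b set \<Rightarrow> ('a \<times> 'b) set \<Rightarrow> bool" where
  "bipartite_graph X Y E \<longleftrightarrow> finite X \<and> finite Y \<and> E \<subseteq> X \<times> Y"

definition degX :: "('a \<times> 'b) set \<Rightarrow> 'a \<Rightarrow> nat" where
  "degX E x = card {y. (x, y) \<in> E}"

definition degY :: "('a \<times> 'b) set \<Rightarrow> 'b \<Rightarrow> nat" where
  "degY E y = card {x. (x, y) \<in> E}"

definition nearly_balanced :: "'a set \<Rightarrow> 'b set \<Rightarrow> bool" where
  "nearly_balanced X Y \<longleftrightarrow> card X = card Y + 1"

definition r_closed :: "nat \<Rightarrow> 'a set \<Rightarrow> 'b set \<Rightarrow> ('a \<times> 'b) set \<Rightarrow> bool" where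
  "r_closed r X Y E \<longleftrightarrow>
     (\<forall>x\<in>X. \<forall>y\<in>Y. (x, y) \<notin> E \<longrightarrow> degX E x + degY E y < r)"

definition min_degree_ge :: "nat \<Rightarrow> 'a set \<Rightarrow> 'b set \<Rightarrow> ('a \<times> 'b) set \<Rightarrow> bool" where
  "min_degree_ge k X Y E \<longleftrightarrow> (\<forall>x\<in>X. k \<le> degX E x) \<and> (\<forall>y\<in>Y. k \<le> degY E y)"

definition has_Kab :: "'a set \<Rightarrow> 'b set \<Rightarrow> ('a \<times> 'b) set \<Rightarrow> nat \<Rightarrow> nat \<Rightarrow> bool" where
  "has_Kab X Y E a b \<longleftrightarrow>
     (\<exists>A B. A \<subseteq> X \<and> B \<subseteq> Y \<and> A \<times> B \<subseteq> E \<and>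
        ((card A = a \<and> card B = b) \<or> (card A = b \<and> card B = a)))"

definition has_complete_bipartite_of_order :: "'a set \<Rightarrow> 'b set \<Rightarrow> ('a \<times> 'b) set \<Rightarrow> nat \<Rightarrow> bool" where
  "has_complete_bipartite_of_order X Y E m \<longleftrightarrow>
     (\<exists>A B. A \<subseteq> X \<and> B \<subseteq> Y \<and> A \<noteq> {} \<and> B \<noteq> {} \<and> A \<times> B \<subseteq> E \<and> card A + card B = m)"

end

theory Submission
  imports Defs
begin

lemma degX_alt: "degX F x = card {p\<in>F. fst p = x}"
proof -
  have "{y. (x,y)\<in>F} = snd ` {p\<in>F. fst p = x}" by force
  moreover have "inj_on snd {p\<in>F. fst p = x}" by (auto simp: inj_on_def prod_eq_iff)
  ultimately show ?thesis unfolding degX_def by (simp add: card_image)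
qed

lemma degY_alt: "degY F y = card {p\<in>F. snd p = y}"
proof -
  have "{x. (x,y)\<in>F} = fst ` {p\<in>F. snd p = y}" by force
  moreover have "inj_on fst {p\<in>F. snd p = y}" by (auto simp: inj_on_def prod_eq_iff)
  ultimately show ?thesis unfolding degY_def by (simp add: card_image)
qed

lemma degX_le: "finite F \<Longrightarrow> degX F x \<le> card F"
  unfolding degX_alt by (rule card_mono) auto

lemma degY_le: "finite F \<Longrightarrow> degY F y \<le> card F"
  unfolding degY_alt by (rule card_mono) auto

lemma arith1:
  fixes d q s :: nat
  assumes "s+2 \<le> d" "d + s + 2 \<le> q"
  shows "(s+1)*(q-s-1) \<le> d*(q-d)"
proof -
  obtain u where u: "d = s+2+u" using assms(1) le_Suc_ex by (metis add.commute le_iff_add)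
  obtain w where w: "q = d+s+2+w" using assms(2) by (metis le_iff_add)
  have "q - s - 1 = s+3+u+w" "q - d = s+2+w" using u w by auto
  then show ?thesis using u by (simp add: algebra_simps)
qed

lemma arith2: "(a::nat) < P + t \<Longrightarrow> t \<le> d \<Longrightarrow> t \<le> P \<Longrightarrow> a - d < P" by arith

lemma case2:
  assumes fin: "finite F" and ne: "F \<noteq> {}"
   and cond: "\<forall>(x,y)\<in>F. q \<le> degX F x + degY F y"
   and lowX: "\<forall>x. degX F x < q-s-1" and lowY: "\<forall>y. degY F y < q-s-1"
  shows "(s+1)*(q-s-1) \<le> card F"
proof -
  obtain x0 y0 where e: "(x0,y0)\<in>F" using ne by auto
  define d where "d = degX F x0"
  define N where "N = {y. (x0,y)\<in>F}"
  have finN: "finite N" unfolding N_def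
    by (rule finite_subset[of _ "snd ` F"]) (use fin in force)+
  have cardN: "card N = d" by (simp add: N_def d_def degX_def)
  have ylow: "\<forall>y\<in>N. q - d \<le> degY F y" using cond unfolding N_def d_def by fastforce
  have "d*(q-d) = (\<Sum>y\<in>N. q - d)" using cardN by simp
  also have "\<dots> \<le> (\<Sum>y\<in>N. degY F y)" by (rule sum_mono) (use ylow in auto)
  also have "\<dots> = (\<Sum>y\<in>N. card {p\<in>F. snd p = y})" by (simp add: degY_alt)
  also have "\<dots> = card (\<Union>y\<in>N. {p\<in>F. snd p = y})"
    by (rule card_UN_disjoint[symmetric]) (use finN fin in auto)
  also have "\<dots> \<le> card F" by (rule card_mono) (use fin in auto)
  finally have A: "d*(q-d) \<le> card F" .
  have "q \<le> d + degY F y0" using cond e d_def by auto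
  moreover have "d < q-s-1" "degY F y0 < q-s-1" using lowX lowY d_def by auto
  ultimately have "s+2 \<le> d" "d+s+2 \<le> q" by auto
  then have "(s+1)*(q-s-1) \<le> d*(q-d)" by (rule arith1)
  with A show ?thesis by simp
qed


lemma removeX:
  fixes F :: "('a\<times>'b) set" and x :: 'a
  assumes fin: "finite F"
  defines "F' \<equiv> {p\<in>F. fst p \<noteq> x}"
  shows "card F' = card F - degX F x"
    and "\<And>a b. (a,b)\<in>F' \<Longrightarrow> degX F' a = degX F a"
    and "\<And>a b. (a,b)\<in>F' \<Longrightarrow> degY F b \<le> degY F' b + 1"
proof -
  have "F = F' \<union> {p\<in>F. fst p = x}" "F' \<inter> {p\<in>F. fst p = x} = {}" unfolding F'_def by auto
  then have "card F = card F' + card {p\<in>F. fst p = x}"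
    by (metis card_Un_disjoint fin finite_Un)
  then show "card F' = card F - degX F x" by (simp add: degX_alt)
next
  fix a b assume "(a,b)\<in>F'"
  then have "a \<noteq> x" unfolding F'_def by auto
  then have "{y. (a,y)\<in>F'} = {y. (a,y)\<in>F}" unfolding F'_def by auto
  then show "degX F' a = degX F a" by (simp add: degX_def)
next
  fix a b assume "(a,b)\<in>F'"
  have "{p\<in>F'. snd p = b} = {p\<in>F. snd p = b} - {(x,b)}" unfolding F'_def by auto
  moreover have "finite {p\<in>F. snd p = b}" using fin by auto
  ultimately show "degY F b \<le> degY F' b + 1" unfolding degY_alt
    using diff_card_le_card_Diff[of "{(x,b)}" "{p\<in>F. snd p = b}"] by simp
qed

lemma removeY:
  fixes F :: "('a\<times>'b) set" and y :: 'b
  assumes fin: "finite F"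
  defines "F' \<equiv> {p\<in>F. snd p \<noteq> y}"
  shows "card F' = card F - degY F y"
    and "\<And>a b. (a,b)\<in>F' \<Longrightarrow> degY F' b = degY F b"
    and "\<And>a b. (a,b)\<in>F' \<Longrightarrow> degX F a \<le> degX F' a + 1"
proof -
  have "F = F' \<union> {p\<in>F. snd p = y}" "F' \<inter> {p\<in>F. snd p = y} = {}" unfolding F'_def by auto
  then have "card F = card F' + card {p\<in>F. snd p = y}"
    by (metis card_Un_disjoint fin finite_Un)
  then show "card F' = card F - degY F y" by (simp add: degY_alt)
next
  fix a b assume "(a,b)\<in>F'"
  then have "b \<noteq> y" unfolding F'_def by auto
  then have "{x. (x,b)\<in>F'} = {x. (x,b)\<in>F}" unfolding F'_def by auto
  then show "degY F' b = degY F b" by (simp add: degY_def)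
next
  fix a b assume "(a,b)\<in>F'"
  have "{p\<in>F'. fst p = a} = {p\<in>F. fst p = a} - {(a,y)}" unfolding F'_def by auto
  moreover have "finite {p\<in>F. fst p = a}" using fin by auto
  ultimately show "degX F a \<le> degX F' a + 1" unfolding degX_alt
    using diff_card_le_card_Diff[of "{(a,y)}" "{p\<in>F. fst p = a}"] by simp
qed

lemma cover:
  "finite F \<Longrightarrow> \<forall>(x,y)\<in>F. q \<le> degX F x + degY F y \<Longrightarrow> card F < (s+1)*(q-s-1) \<Longrightarrow>
   \<exists>C1 C2. finite C1 \<and> finite C2 \<and> card C1 + card C2 \<le> s \<and> (\<forall>(x,y)\<in>F. x\<in>C1 \<or> y\<in>C2)"
proof (induction s arbitrary: F q)
  case 0
  show ?case
  proof (cases "F = {}")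
    case True show ?thesis apply (rule exI[of _ "{}"], rule exI[of _ "{}"]) using True by simp
  next
    case False
    show ?thesis
    proof (cases "(\<exists>x. q-1 \<le> degX F x) \<or> (\<exists>y. q-1 \<le> degY F y)")
      case True
      have "q - 1 \<le> card F" using True degX_le[OF "0.prems"(1)] degY_le[OF "0.prems"(1)] le_trans by blast
      then show ?thesis using "0.prems"(3) by simp
    next
      case False
      then have "\<forall>x. degX F x < q-0-1" "\<forall>y. degY F y < q-0-1" by (auto simp: not_le)
      then have "(0+1)*(q-0-1) \<le> card F" using case2[OF "0.prems"(1) \<open>F \<noteq> {}\<close> "0.prems"(2)] by blast
      then show ?thesis using "0.prems" by auto
    qed
  qed
next
  case (Suc s)
  show ?case
  proof (cases "F = {}")
    case True show ?thesis apply (rule exI[of _ "{}"], rule exI[of _ "{}"]) using True by simp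
  next
    case False
    consider (X) x where "q-Suc s-1 \<le> degX F x" | (Y) y where "q-Suc s-1 \<le> degY F y"
      | (N) "\<forall>x. degX F x < q-Suc s-1" "\<forall>y. degY F y < q-Suc s-1" using not_le by blast
    then show ?thesis
    proof cases
      case X
      define F' where "F' = {p\<in>F. fst p \<noteq> x}"
      note R = removeX[OF \<open>finite F\<close>, where x=x, folded F'_def]
      have "finite F'" using Suc.prems unfolding F'_def by auto
      moreover have "\<forall>(a,b)\<in>F'. q - 1 \<le> degX F' a + degY F' b"
      proof (intro ballI, clarify)
        fix a b assume ab: "(a,b)\<in>F'"
        then have "(a,b)\<in>F" unfolding F'_def by auto
        then have "q \<le> degX F a + degY F b" using Suc.prems(2) by auto
        then show "q - 1 \<le> degX F' a + degY F' b" using R(2)[OF ab] R(3)[OF ab] by linarith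
      qed
      moreover have "card F' < (s+1)*((q-1)-s-1)"
      proof -
        define t where "t = q-Suc s-1"
        have a: "(s+1)*((q-1)-s-1) = (s+1)*t" unfolding t_def by simp
        have b: "card F < (Suc s+1)*t" using Suc.prems t_def by simp
        have c: "(Suc s+1)*t = (s+1)*t + t" by simp
        have d: "t \<le> degX F x" using X t_def by simp
        have "card F - degX F x < (s+1)*t" using arith2[OF b[unfolded c] d] by simp
        then show ?thesis unfolding a using R(1) by simp
      qed
      ultimately have "\<exists>C1 C2. finite C1 \<and> finite C2 \<and> card C1 + card C2 \<le> s \<and> (\<forall>(a,b)\<in>F'. a\<in>C1 \<or> b\<in>C2)"
        by (rule Suc.IH)
      then obtain C1 C2 where C: "finite C1" "finite C2" "card C1 + card C2 \<le> s"
          "\<forall>(a,b)\<in>F'. a\<in>C1 \<or> b\<in>C2"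
        by blast
      show ?thesis
      proof (intro exI conjI)
        show "finite (insert x C1)" "finite C2" using C by auto
        show "card (insert x C1) + card C2 \<le> Suc s" using C by (simp add: card_insert_if)
        show "\<forall>(a,b)\<in>F. a\<in>insert x C1 \<or> b\<in>C2" using C(4) unfolding F'_def by auto
      qed
    next
      case Y
      define F' where "F' = {p\<in>F. snd p \<noteq> y}"
      note R = removeY[OF \<open>finite F\<close>, where y=y, folded F'_def]
      have "finite F'" using Suc.prems unfolding F'_def by auto
      moreover have "\<forall>(a,b)\<in>F'. q - 1 \<le> degX F' a + degY F' b"
      proof (intro ballI, clarify)
        fix a b assume ab: "(a,b)\<in>F'"
        then have "(a,b)\<in>F" unfolding F'_def by auto
        then have "q \<le> degX F a + degY F b" using Suc.prems(2) by auto
        then show "q - 1 \<le> degX F' a + degY F' b" using R(2)[OF ab] R(3)[OF ab] by linarith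
      qed
      moreover have "card F' < (s+1)*((q-1)-s-1)"
      proof -
        define t where "t = q-Suc s-1"
        have a: "(s+1)*((q-1)-s-1) = (s+1)*t" unfolding t_def by simp
        have b: "card F < (Suc s+1)*t" using Suc.prems t_def by simp
        have c: "(Suc s+1)*t = (s+1)*t + t" by simp
        have d: "t \<le> degY F y" using Y t_def by simp
        have "card F - degY F y < (s+1)*t" using arith2[OF b[unfolded c] d] by simp
        then show ?thesis unfolding a using R(1) by simp
      qed
      ultimately have "\<exists>C1 C2. finite C1 \<and> finite C2 \<and> card C1 + card C2 \<le> s \<and> (\<forall>(a,b)\<in>F'. a\<in>C1 \<or> b\<in>C2)"
        by (rule Suc.IH)
      then obtain C1 C2 where C: "finite C1" "finite C2" "card C1 + card C2 \<le> s"
          "\<forall>(a,b)\<in>F'. a\<in>C1 \<or> b\<in>C2"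
        by blast
      show ?thesis
      proof (intro exI conjI)
        show "finite C1" "finite (insert y C2)" using C by auto
        show "card C1 + card (insert y C2) \<le> Suc s" using C by (simp add: card_insert_if)
        show "\<forall>(a,b)\<in>F. a\<in>C1 \<or> b\<in>insert y C2" using C(4) unfolding F'_def by auto
      qed
    next
      case N
      then have "(Suc s+1)*(q-Suc s-1) \<le> card F" using case2[OF Suc.prems(1) \<open>F \<noteq> {}\<close> Suc.prems(2)] by blast
      then show ?thesis using Suc.prems by auto
    qed
  qed
qed


theorem corollary3p2:
  fixes X :: "'a set" and Y :: "'b set" and E :: "('a \<times> 'b) set" and k p n :: nat
  assumes "p \<le> k"
    and "n \<ge> 2 * k - p + 2"
    and "bipartite_graph X Y E"
    and "nearly_balanced X Y"
    and "r_closed (n + p + 1) X Y E"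
    and "card X + card Y = 2 * n - 1"
    and "int (card E) > int n * (int n - int k + int p - 2) + (int k + 2) * (int k - int p + 1)"
  shows "has_complete_bipartite_of_order X Y E (2 * n - k + p - 1)
         \<and> (min_degree_ge k X Y E \<longrightarrow>
              has_Kab X Y E (n - 1) (n - k + p) \<or> has_Kab X Y E n (n - k + p - 1))"
proof -
  define s where "s = k - p"
  define q where "q = n - 1 - p"
  define H where "H = (X \<times> Y) - E"
  have fX: "finite X" and fY: "finite Y" and EXY: "E \<subseteq> X \<times> Y"
    using assms(3) unfolding bipartite_graph_def by auto
  have cX: "card X = n" and cY: "card Y = n - 1" and n2: "n \<ge> k + 2"
    using assms(1,2,4,6) unfolding nearly_balanced_def by auto
  have fH: "finite H" unfolding H_def using fX fY by auto
  have HXY: "H \<subseteq> X \<times> Y" unfolding H_def by auto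
  have dEX: "degX E x \<le> n - 1" for x
  proof -
    have "{y. (x,y)\<in>E} \<subseteq> Y" using EXY by auto
    then show ?thesis unfolding degX_def using card_mono[OF fY] cY by auto
  qed
  have dEY: "degY E y \<le> n" for y
  proof -
    have "{x. (x,y)\<in>E} \<subseteq> X" using EXY by auto
    then show ?thesis unfolding degY_def using card_mono[OF fX] cX by auto
  qed
  have dHX: "degX H x = (n - 1) - degX E x" if "x \<in> X" for x
  proof -
    have "{y. (x,y)\<in>H} = Y - {y. (x,y)\<in>E}" unfolding H_def using that by auto
    moreover have "{y. (x,y)\<in>E} \<subseteq> Y" using EXY by auto
    ultimately show ?thesis unfolding degX_def using card_Diff_subset[OF finite_subset[OF _ fY]] cY
      by auto
  qed
  have dHY: "degY H y = n - degY E y" if "y \<in> Y" for y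
  proof -
    have "{x. (x,y)\<in>H} = X - {x. (x,y)\<in>E}" unfolding H_def using that by auto
    moreover have "{x. (x,y)\<in>E} \<subseteq> X" using EXY by auto
    ultimately show ?thesis unfolding degY_def using card_Diff_subset[OF finite_subset[OF _ fX]] cX
      by auto
  qed
  have clos: "\<forall>(x,y)\<in>H. q \<le> degX H x + degY H y"
  proof (intro ballI, clarify)
    fix x y assume xy: "(x,y)\<in>H"
    then have "x \<in> X" "y \<in> Y" "(x,y) \<notin> E" unfolding H_def by auto
    then have "degX E x + degY E y < n + p + 1" using assms(5) unfolding r_closed_def by auto
    then show "q \<le> degX H x + degY H y"
      using dHX[OF \<open>x\<in>X\<close>] dHY[OF \<open>y\<in>Y\<close>] dEX[of x] dEY[of y] unfolding q_def by linarith
  qed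
  have cardH: "card H < (s+1)*(q-s-1)"
  proof -
    have "card H = card (X \<times> Y) - card E" unfolding H_def
      by (rule card_Diff_subset[OF finite_subset[OF EXY] EXY]) (use fX fY in auto)
    then have h1: "int (card H) = int n * (int n - 1) - int (card E)"
      using card_cartesian_product[of X Y] cX cY EXY card_mono[of "X \<times> Y" E] fX fY n2
      by (simp add: of_nat_diff)
    have h2: "q - s - 1 = n - k - 2" unfolding q_def s_def using assms(1) n2 by auto
    have h3: "int ((s+1)*(n-k-2)) = (int k - int p + 1) * (int n - int k - 2)"
    proof -
      have e1: "int (s+1) = int k - int p + 1" using assms(1) s_def by simp
      have e2: "int (n-k-2) = int n - int k - 2" using n2 by simp
      show ?thesis unfolding of_nat_mult e1 e2 ..
    qed
    have h4: "int n * (int n - 1) - (int k - int p + 1) * (int n - int k - 2)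
        = int n * (int n - int k + int p - 2) + (int k + 2) * (int k - int p + 1)"
      by (simp add: algebra_simps)
    have "int (card H) < int ((s+1)*(n-k-2))" using h1 h3 h4 assms(7) by linarith
    then have "card H < (s+1)*(n-k-2)" by (simp only: of_nat_less_iff)
    then show ?thesis using h2 by simp
  qed
  obtain D1 D2 where D: "finite D1" "finite D2" "card D1 + card D2 \<le> s" "\<forall>(x,y)\<in>H. x\<in>D1 \<or> y\<in>D2"
    using cover[OF fH clos cardH] by blast
  define P where "P m \<longleftrightarrow> (\<exists>C1 C2. finite C1 \<and> finite C2 \<and> card C1 + card C2 = m \<and>
     (\<forall>(x,y)\<in>H. x\<in>C1 \<or> y\<in>C2))" for m
  have "P (card D1 + card D2)" unfolding P_def using D by blast
  define m0 where "m0 = (LEAST m. P m)"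
  have Pm0: "P m0" unfolding m0_def by (rule LeastI) fact
  have m0le: "m0 \<le> s" using Least_le[of P, OF \<open>P (card D1 + card D2)\<close>] D(3) unfolding m0_def by linarith
  have minimal: "\<not> P m" if "m < m0" for m using not_less_Least[of m P] that unfolding m0_def by blast
  obtain C1 C2 where C: "finite C1" "finite C2" "card C1 + card C2 = m0"
      and cov: "\<forall>(x,y)\<in>H. x\<in>C1 \<or> y\<in>C2"
    using Pm0 unfolding P_def by blast
  have complete: "(X - C1) \<times> (Y - C2) \<subseteq> E"
  proof clarify
    fix a b assume "a \<in> X" "a \<notin> C1" "b \<in> Y" "b \<notin> C2"
    then show "(a,b) \<in> E" using cov unfolding H_def by auto
  qed
  have cA0: "n - card C1 \<le> card (X - C1)" using diff_card_le_card_Diff[OF C(1), of X] cX by simp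
  have cB0: "n - 1 - card C2 \<le> card (Y - C2)" using diff_card_le_card_Diff[OF C(2), of Y] cY by simp
  have cB0': "card (Y - C2) \<le> n - 1" using card_mono[OF fY, of "Y - C2"] cY by auto
  have part1: "has_complete_bipartite_of_order X Y E (2 * n - k + p - 1)"
  proof -
    define m where "m = 2 * n - k + p - 1"
    have m_eq: "m = 2*n - 1 - s" unfolding m_def s_def using assms(1) n2 by auto
    have "m - card (Y - C2) \<le> card (X - C1)" using cA0 cB0 C(3) m0le m_eq by linarith
    then obtain A where A: "A \<subseteq> X - C1" "card A = m - card (Y - C2)"
      by (meson obtain_subset_with_card_n)
    have "1 \<le> card A" using A(2) cB0' m_eq n2 s_def by linarith
    then have "A \<noteq> {}" by (metis card.empty not_one_le_zero)
    have "1 \<le> card (Y - C2)" using cB0 C(3) m0le n2 s_def by linarith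
    then have "Y - C2 \<noteq> {}" by (metis card.empty not_one_le_zero)
    have "card A + card (Y - C2) = m" using A(2) cB0' m_eq cA0 s_def n2 by linarith
    show ?thesis unfolding has_complete_bipartite_of_order_def m_def[symmetric]
      apply (rule exI[of _ A], rule exI[of _ "Y - C2"])
      using A \<open>A \<noteq> {}\<close> \<open>Y - C2 \<noteq> {}\<close> \<open>card A + card (Y - C2) = m\<close> complete by auto
  qed
  have part2: "has_Kab X Y E (n - 1) (n - k + p) \<or> has_Kab X Y E n (n - k + p - 1)"
    if md: "min_degree_ge k X Y E"
  proof -
    have "C1 = {} \<or> C2 = {}"
    proof (cases "C1 = {}")
      case False
      then obtain x where x: "x \<in> C1" by auto
      have "\<not> P (card (C1 - {x}) + card C2)"
      proof (rule minimal)
        have "card C1 > 0" using C(1) x card_gt_0_iff by blast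
        then show "card (C1 - {x}) + card C2 < m0" using C(3) x C(1) by (simp add: card_Diff_singleton)
      qed
      then have "\<not> (\<forall>(a,b)\<in>H. a\<in>C1 - {x} \<or> b\<in>C2)" unfolding P_def using C by blast
      then obtain a b where ab: "(a,b)\<in>H" "a \<notin> C1 - {x}" "b \<notin> C2" by auto
      then have "a = x" using cov by auto
      with ab have xb: "(x,b)\<in>H" "b \<notin> C2" by auto
      then have "x \<in> X" unfolding H_def by auto
      have "{a. (a,b)\<in>H} \<subseteq> C1" using cov xb(2) by auto
      then have "degY H b \<le> card C1" unfolding degY_def using card_mono[OF C(1)] by auto
      moreover have "k \<le> degX E x" using md \<open>x\<in>X\<close> unfolding min_degree_ge_def by auto
      moreover have "q \<le> degX H x + degY H b" using clos xb(1) by auto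
      ultimately have "s \<le> card C1" using dHX[OF \<open>x\<in>X\<close>] dEX[of x] unfolding q_def s_def by linarith
      then have "card C2 = 0" using C(3) m0le by linarith
      then show ?thesis using C(2) by simp
    qed simp
    then show ?thesis
    proof
      assume "C1 = {}"
      then have "n - 1 - s \<le> card (Y - C2)" using cB0 C(3) m0le by linarith
      then obtain B where B: "B \<subseteq> Y - C2" "card B = n - 1 - s"
        by (meson obtain_subset_with_card_n)
      have "has_Kab X Y E n (n - k + p - 1)" unfolding has_Kab_def
        apply (rule exI[of _ X], rule exI[of _ B])
        using B complete \<open>C1 = {}\<close> cX s_def assms(1) n2 by auto
      then show ?thesis by simp
    next
      assume "C2 = {}"
      then have "n - s \<le> card (X - C1)" using cA0 C(3) m0le by linarith
      then obtain A where A: "A \<subseteq> X - C1" "card A = n - s"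
        by (meson obtain_subset_with_card_n)
      have "has_Kab X Y E (n - 1) (n - k + p)" unfolding has_Kab_def
        apply (rule exI[of _ A], rule exI[of _ Y])
        using A complete \<open>C2 = {}\<close> cY s_def assms(1) n2 by auto
      then show ?thesis by simp
    qed
  qed
  show ?thesis using part1 part2 by blast
qed

end
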